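(* There exists a semifilter $\mathcal{T}$ that is homeomorphic to $\mathbf{T}$, where $\mathbf{T}$ is the (unique up to homeomorphism) zero-dimensional space that is the union of a completely metrizable subspace and a countable subspace, is nowhere $\sigma$-compact, and is nowhere completely metrizable.
   Context: All spaces are separable metrizable. For a topological property $\mathcal{P}$, a space $X$ is nowhere $\mathcal{P}$ if $X$ is non-empty and no non-empty open subspace of $X$ has $\mathcal{P}$. It is known (van Douwen) that a zero-dimensional space with the three listed properties is unique up to homeomorphism; this space is denoted $\mathbf{T}$. A semifilter (on $\omega$) is a collection $\mathcal{S}\subseteq\mathcal{P}(\omega)$ such that $\varnothing\notin\mathcal{S}$, $\omega\in\mathcal{S}$, $\mathcal{S}$ is closed under finite modifications, and $\mathcal{S}$ is upward-closed; it is viewed as a subspace of $2^\omega$ via characteristic functions. *)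

theory Defs
  imports "HOL-Analysis.Analysis"
begin

definition semifilter :: "nat set set \<Rightarrow> bool" where
  "semifilter S \<longleftrightarrow>
     {} \<notin> S \<and> UNIV \<in> S \<and>
     (\<forall>A B. A \<in> S \<and> finite ((A - B) \<union> (B - A)) \<longrightarrow> B \<in> S) \<and>
     (\<forall>A B. A \<in> S \<and> A \<subseteq> B \<longrightarrow> B \<in> S)"

definition cantor_space :: "(nat \<Rightarrow> bool) topology" where
  "cantor_space = product_topology (\<lambda>_. discrete_topology (UNIV :: bool set)) UNIV"

definition char_fun :: "nat set \<Rightarrow> (nat \<Rightarrow> bool)" where
  "char_fun A = (\<lambda>n. n \<in> A)"

definition subspace_of_family :: "nat set set \<Rightarrow> (nat \<Rightarrow> bool) topology" where
  "subspace_of_family S = subtopology cantor_space (char_fun ` S)"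

definition zero_dimensional :: "'a topology \<Rightarrow> bool" where
  "zero_dimensional X \<longleftrightarrow> X dim_le 0"

definition sigma_compact_space :: "'a topology \<Rightarrow> bool" where
  "sigma_compact_space X \<longleftrightarrow>
     (\<exists>F. countable F \<and> \<Union>F = topspace X \<and> (\<forall>K\<in>F. compactin X K))"

definition nowhere :: "('a topology \<Rightarrow> bool) \<Rightarrow> 'a topology \<Rightarrow> bool" where
  "nowhere P X \<longleftrightarrow> topspace X \<noteq> {} \<and>
     (\<forall>U. openin X U \<and> U \<noteq> {} \<longrightarrow> \<not> P (subtopology X U))"

definition T_like :: "'a topology \<Rightarrow> bool" where
  "T_like X \<longleftrightarrow>
     zero_dimensional X \<and>
     (\<exists>C D. C \<union> D = topspace X \<and> completely_metrizable_space (subtopology X C) \<and> countable D) \<and>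
     nowhere sigma_compact_space X \<and>
     nowhere completely_metrizable_space X"

end

theory Submission
  imports Defs
begin


definition cyl :: "(nat \<Rightarrow> bool) \<Rightarrow> nat \<Rightarrow> (nat \<Rightarrow> bool) set" where
  "cyl p n = {f. \<forall>i<n. f i = p i}"

lemma topspace_cantor [simp]: "topspace cantor_space = UNIV"
  by (simp add: cantor_space_def PiE_UNIV_domain)

lemma cantor_UNIV: "openin cantor_space UNIV" "closedin cantor_space UNIV"
  by (metis openin_topspace topspace_cantor, metis closedin_topspace topspace_cantor)

lemma coord_open: "openin cantor_space {f. f i \<in> A}"
proof -
  have "continuous_map cantor_space (discrete_topology UNIV) (\<lambda>f. f i)"
    unfolding cantor_space_def by (rule continuous_map_product_projection) simp
  then have "openin cantor_space {f \<in> topspace cantor_space. f i \<in> A}"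
    by (rule openin_continuous_map_preimage) simp
  then show ?thesis by simp
qed

lemma coord_closed: "closedin cantor_space {f. f i \<in> A}"
proof -
  have "closedin cantor_space (topspace cantor_space - {f. f i \<in> -A})"
    using closedin_diff[OF closedin_topspace coord_open[of i "-A"]] by simp
  moreover have "topspace cantor_space - {f. f i \<in> -A} = {f. f i \<in> A}" by auto
  ultimately show ?thesis by simp
qed

lemma cyl_Suc: "cyl p (Suc n) = cyl p n \<inter> {f. f n \<in> {p n}}"
  by (auto simp: cyl_def less_Suc_eq)

lemma cyl_clopen: "openin cantor_space (cyl p n) \<and> closedin cantor_space (cyl p n)"
proof (induction n)
  case 0
  have "cyl p 0 = topspace cantor_space" by (simp add: cyl_def)
  then show ?case using cantor_UNIV by simp
next
  case (Suc n)
  then show ?case unfolding cyl_Suc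
    using coord_open coord_closed by blast
qed

lemma open_cyl_sub:
  assumes "openin cantor_space W" "x \<in> W"
  shows "\<exists>n. cyl x n \<subseteq> W"
proof -
  have "\<exists>U. finite {i \<in> UNIV. U i \<noteq> topspace (discrete_topology (UNIV::bool set))} \<and>
      (\<forall>i\<in>UNIV. openin (discrete_topology UNIV) (U i)) \<and> x \<in> Pi\<^sub>E UNIV U \<and> Pi\<^sub>E UNIV U \<subseteq> W"
    using assms(1)[unfolded cantor_space_def openin_product_topology_alt] assms(2) by blast
  then obtain U where U: "finite {i. U i \<noteq> UNIV}" "x \<in> Pi\<^sub>E UNIV U" "Pi\<^sub>E UNIV U \<subseteq> W"
    by auto
  obtain n where n: "{i. U i \<noteq> UNIV} \<subseteq> {..<n}"
    using finite_nat_bounded[OF U(1)] by (elim exE) (rule that)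
  have "cyl x n \<subseteq> Pi\<^sub>E UNIV U"
  proof
    fix f assume f: "f \<in> cyl x n"
    have "\<forall>i. f i \<in> U i"
    proof
      fix i
      show "f i \<in> U i"
      proof (cases "i < n")
        case True then show ?thesis using f U(2) by (auto simp: cyl_def PiE_UNIV_domain)
      next
        case False then have "U i = UNIV" using n by auto
        then show ?thesis by simp
      qed
    qed
    then show "f \<in> Pi\<^sub>E UNIV U" by (simp add: PiE_UNIV_domain)
  qed
  then show ?thesis using U(3) by blast
qed

lemma cantor_cm: "completely_metrizable_space cantor_space"
  unfolding cantor_space_def
  by (simp add: completely_metrizable_space_product_topology completely_metrizable_space_discrete_topology)

lemma cantor_metrizable: "metrizable_space cantor_space"
  by (simp add: cantor_cm completely_metrizable_imp_metrizable_space)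

lemma cantor_Hausdorff: "Hausdorff_space cantor_space"
  by (simp add: cantor_metrizable metrizable_imp_Hausdorff_space)

lemma cantor_dim0: "cantor_space dim_le 0"
  unfolding dimension_le_0_neighbourhood_base_of_clopen neighbourhood_base_of
proof (intro allI impI)
  fix W x assume "openin cantor_space W \<and> x \<in> W"
  then obtain n where "cyl x n \<subseteq> W" using open_cyl_sub by blast
  moreover have "x \<in> cyl x n" by (simp add: cyl_def)
  ultimately show "\<exists>U V. openin cantor_space U \<and> (closedin cantor_space V \<and> openin cantor_space V) \<and> x \<in> U \<and> U \<subseteq> V \<and> V \<subseteq> W"
    using cyl_clopen by blast
qed

lemma dense_sub:
  assumes "T \<subseteq> Y" "\<And>q N. q \<in> Y \<Longrightarrow> \<exists>f\<in>T. \<forall>i<N. f i = q i"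
  shows "subtopology cantor_space Y closure_of T = Y"
proof -
  have "Y \<subseteq> cantor_space closure_of T"
  proof
    fix q assume q: "q \<in> Y"
    show "q \<in> cantor_space closure_of T"
      unfolding in_closure_of
    proof (simp, intro allI impI)
      fix V assume "q \<in> V \<and> openin cantor_space V"
      then obtain N where "cyl q N \<subseteq> V" using open_cyl_sub by blast
      moreover obtain f where "f \<in> T" "\<forall>i<N. f i = q i" using assms(2) q by blast
      ultimately show "\<exists>y. y \<in> T \<and> y \<in> V" by (auto simp: cyl_def)
    qed
  qed
  moreover have "Y \<inter> T = T" using assms(1) by auto
  ultimately show ?thesis
    by (simp add: closure_of_subtopology Int_absorb2)
qed

lemma baire_cantor:
  assumes Y: "gdelta_in cantor_space Y" "Y \<noteq> {}" and G: "countable G"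
    and op: "\<And>T. T \<in> G \<Longrightarrow> openin (subtopology cantor_space Y) T"
    and sub: "\<And>T. T \<in> G \<Longrightarrow> T \<subseteq> Y"
    and dn: "\<And>T q N. T \<in> G \<Longrightarrow> q \<in> Y \<Longrightarrow> \<exists>f\<in>T. \<forall>i<N. f i = q i"
  shows "Y \<inter> \<Inter>G \<noteq> {}"
proof (cases "G = {}")
  case True then show ?thesis using Y by simp
next
  case False
  have cm: "completely_metrizable_space (subtopology cantor_space Y)"
    using Y(1) cantor_cm completely_metrizable_space_gdelta_in by blast
  have "subtopology cantor_space Y closure_of \<Inter>G = topspace (subtopology cantor_space Y)"
    by (rule Baire_category) (use cm G op sub dense_sub dn in auto)
  moreover have "topspace (subtopology cantor_space Y) = Y" by simp
  moreover have "\<Inter>G \<subseteq> Y" using False sub by blast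
  ultimately show ?thesis using Y(2)
    by (metis closure_of_empty inf.absorb_iff2)
qed



definition SS :: "nat set set" where
  "SS = {A. infinite {i\<in>A. even i} \<or> finite {i. odd i \<and> i \<notin> A}}"

definition Sf :: "(nat \<Rightarrow> bool) set" where
  "Sf = {f. infinite {i. even i \<and> f i} \<or> finite {i. odd i \<and> \<not> f i}}"

definition Einf :: "(nat \<Rightarrow> bool) set" where
  "Einf = {f. infinite {i. even i \<and> f i}}"

lemma image_SS: "char_fun ` SS = Sf"
proof -
  have "char_fun ` SS = {f. Collect f \<in> SS}"
  proof
    show "char_fun ` SS \<subseteq> {f. Collect f \<in> SS}" by (auto simp: char_fun_def)
    show "{f. Collect f \<in> SS} \<subseteq> char_fun ` SS"
    proof
      fix f assume "f \<in> {f. Collect f \<in> SS}"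
      moreover have "f = char_fun (Collect f)" by (simp add: char_fun_def)
      ultimately show "f \<in> char_fun ` SS" by blast
    qed
  qed
  then show ?thesis by (simp add: SS_def Sf_def conj_commute)
qed

lemma finite_symdiff_sub:
  assumes "finite ((A - B) \<union> (B - A))" "finite {i. P i \<and> i \<notin> A}"
  shows "finite {i. P i \<and> i \<notin> B}"
  by (rule finite_subset[OF _ finite_UnI[OF assms]]) auto

lemma infinite_symdiff_sub:
  assumes "finite ((A - B) \<union> (B - A))" "infinite {i\<in>A. P i}"
  shows "infinite {i\<in>B. P i}"
proof
  assume "finite {i\<in>B. P i}"
  then have "finite ({i\<in>B. P i} \<union> (A - B))" using assms(1) by auto
  moreover have "{i\<in>A. P i} \<subseteq> {i\<in>B. P i} \<union> (A - B)" by auto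
  ultimately show False using assms(2) finite_subset by blast
qed

lemma semifilter_SS: "semifilter SS"
  unfolding semifilter_def
proof (intro conjI allI impI)
  show "{} \<notin> SS"
  proof
    assume "{} \<in> SS"
    then have "finite {i::nat. odd i}" by (simp add: SS_def)
    moreover have "infinite {i::nat. odd i}"
      unfolding infinite_nat_iff_unbounded_le
    proof
      fix m :: nat show "\<exists>n\<ge>m. n \<in> {i. odd i}" by (intro exI[of _ "2*m+1"]) simp
    qed
    ultimately show False by simp
  qed
  show "UNIV \<in> SS" by (simp add: SS_def)
  fix A B
  show "A \<in> SS \<and> finite (A - B \<union> (B - A)) \<Longrightarrow> B \<in> SS"
  proof -
    assume h: "A \<in> SS \<and> finite (A - B \<union> (B - A))"
    then consider "infinite {i\<in>A. even i}" | "finite {i. odd i \<and> i \<notin> A}"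
      unfolding SS_def by blast
    then show "B \<in> SS"
    proof cases
      case 1
      then have "infinite {i\<in>B. even i}" using infinite_symdiff_sub[of A B even] h by simp
      then show ?thesis unfolding SS_def by blast
    next
      case 2
      then have "finite {i. odd i \<and> i \<notin> B}" using finite_symdiff_sub[of A B odd] h by simp
      then show ?thesis unfolding SS_def by blast
    qed
  qed
  assume "A \<in> SS \<and> A \<subseteq> B"
  then have AB: "A \<in> SS" "A \<subseteq> B" by auto
  then consider "infinite {i\<in>A. even i}" | "finite {i. odd i \<and> i \<notin> A}"
    unfolding SS_def by blast
  then show "B \<in> SS"
  proof cases
    case 1
    moreover have "{i\<in>A. even i} \<subseteq> {i\<in>B. even i}" using AB by auto
    ultimately have "infinite {i\<in>B. even i}" using finite_subset by blast
    then show ?thesis unfolding SS_def by blast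
  next
    case 2
    moreover have "{i. odd i \<and> i \<notin> B} \<subseteq> {i. odd i \<and> i \<notin> A}" using AB by auto
    ultimately have "finite {i. odd i \<and> i \<notin> B}" using finite_subset by blast
    then show ?thesis unfolding SS_def by blast
  qed
qed



definition zeroset :: "(nat \<Rightarrow> bool) \<Rightarrow> (nat \<Rightarrow> bool) set" where
  "zeroset Q = {f. \<forall>i. Q i \<longrightarrow> \<not> f i}"

lemma zeroset_closed: "closedin cantor_space (zeroset Q)"
proof -
  have eq: "zeroset Q = \<Inter> (range (\<lambda>i. if Q i then {f. f i \<in> {False}} else UNIV))"
    by (auto simp: zeroset_def split: if_splits)
  have cl: "\<And>i. closedin cantor_space {f. \<not> f i}" using coord_closed[of _ "{False}"] by simp
  show ?thesis unfolding eq
    by (rule closedin_Inter) (auto simp: cl cantor_UNIV)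
qed

lemma inf_odd_ge: "infinite {i::nat. odd i \<and> M \<le> i}"
  unfolding infinite_nat_iff_unbounded_le
proof
  fix m :: nat show "\<exists>n\<ge>m. n \<in> {i. odd i \<and> M \<le> i}" by (intro exI[of _ "2*(m+M)+1"]) simp
qed

lemma inf_even_ge: "infinite {i::nat. even i \<and> M \<le> i}"
  unfolding infinite_nat_iff_unbounded_le
proof
  fix m :: nat show "\<exists>n\<ge>m. n \<in> {i. even i \<and> M \<le> i}" by (intro exI[of _ "2*(m+M)"]) simp
qed

lemma Einf_gdelta: "gdelta_in cantor_space Einf"
proof -
  have eq: "Einf = \<Inter> (range (\<lambda>N. \<Union> ((\<lambda>i. {f. f i \<in> {True}}) ` {i. N \<le> i \<and> even i})))"
  proof -
    have "\<And>f::nat\<Rightarrow>bool. infinite {i. even i \<and> f i} \<longleftrightarrow> (\<forall>N. \<exists>i. N \<le> i \<and> even i \<and> f i)"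
    proof -
      fix f :: "nat \<Rightarrow> bool"
      have "infinite {i. even i \<and> f i} \<longleftrightarrow> (\<forall>m. \<exists>n\<ge>m. n \<in> {i. even i \<and> f i})"
        using infinite_nat_iff_unbounded_le by blast
      then show "infinite {i. even i \<and> f i} \<longleftrightarrow> (\<forall>N. \<exists>i. N \<le> i \<and> even i \<and> f i)" by simp
    qed
    then show ?thesis unfolding Einf_def by auto
  qed
  have op: "\<And>i. openin cantor_space {f. f i}" using coord_open[of _ "{True}"] by simp
  show ?thesis unfolding eq
    by (rule gdelta_in_Inter) (auto intro!: open_imp_gdelta_in openin_Union op)
qed

definition Dset :: "(nat \<Rightarrow> bool) set" where
  "Dset = {f. finite {i. even i \<and> f i} \<and> finite {i. odd i \<and> \<not> f i}}"

lemma Dset_countable: "countable Dset"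
proof -
  let ?g = "\<lambda>f::nat\<Rightarrow>bool. ({i. even i \<and> f i}, {i. odd i \<and> \<not> f i})"
  have "inj_on ?g Dset"
  proof (rule inj_onI)
    fix f h assume "?g f = ?g h"
    then have e: "{i. even i \<and> f i} = {i. even i \<and> h i}" and o: "{i. odd i \<and> \<not> f i} = {i. odd i \<and> \<not> h i}"
      by auto
    show "f = h"
    proof
      fix i show "f i = h i"
      proof (cases "even i")
        case True then show ?thesis using e by (metis (mono_tags, lifting) mem_Collect_eq)
      next
        case False then show ?thesis using o by (metis (mono_tags, lifting) mem_Collect_eq)
      qed
    qed
  qed
  moreover have "?g ` Dset \<subseteq> Collect finite \<times> Collect finite"
    by (auto simp: Dset_def)
  moreover have "countable ((Collect finite :: nat set set) \<times> (Collect finite :: nat set set))"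
    using countable_Collect_finite[where 'a=nat] by (intro countable_SIGMA) auto
  ultimately have "countable (?g ` Dset)" by (meson countable_subset)
  then show ?thesis using \<open>inj_on ?g Dset\<close> by (rule countable_image_inj_on)
qed

lemma Einf_sub: "Einf \<subseteq> Sf" by (auto simp: Einf_def Sf_def)

lemma nowhere_cm_aux:
  assumes W: "openin cantor_space W" and p: "p \<in> W" "p \<in> Sf"
  shows "\<not> completely_metrizable_space (subtopology cantor_space (W \<inter> Sf))"
proof
  assume "completely_metrizable_space (subtopology cantor_space (W \<inter> Sf))"
  then have gd: "gdelta_in cantor_space (W \<inter> Sf)"
    using completely_metrizable_space_imp_gdelta_in[OF cantor_metrizable] by simp
  obtain n where n: "cyl p n \<subseteq> W" using open_cyl_sub W p by blast
  define Z where "Z = cyl p n \<inter> zeroset (\<lambda>i. even i \<and> n \<le> i)"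
  have Zc: "closedin cantor_space Z" unfolding Z_def
    using cyl_clopen zeroset_closed by blast
  define Y where "Y = W \<inter> Sf \<inter> Z"
  have Ygd: "gdelta_in cantor_space Y" unfolding Y_def
    by (rule gdelta_in_Int[OF gd closed_imp_gdelta_in[OF cantor_metrizable Zc]])
  have memY: "f \<in> Y \<longleftrightarrow> f \<in> cyl p n \<and> f \<in> Sf \<and> (\<forall>i. even i \<and> n \<le> i \<longrightarrow> \<not> f i)" for f
    using n by (auto simp: Y_def Z_def zeroset_def)
  have "Y \<subseteq> Dset"
  proof
    fix f assume f: "f \<in> Y"
    then have "{i. even i \<and> f i} \<subseteq> {..<n}" using memY by force
    then have fe: "finite {i. even i \<and> f i}" using finite_subset by blast
    then have "finite {i. odd i \<and> \<not> f i}" using f memY by (simp add: Sf_def)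
    then show "f \<in> Dset" using fe by (simp add: Dset_def)
  qed
  then have Ycount: "countable Y" using Dset_countable countable_subset by blast
  define f0 where "f0 = (\<lambda>i. if i < n then p i else odd i)"
  have "f0 \<in> Y"
  proof -
    have "{i. odd i \<and> \<not> f0 i} \<subseteq> {..<n}" by (auto simp: f0_def)
    then have "f0 \<in> Sf" unfolding Sf_def using finite_subset by blast
    then show ?thesis using memY by (auto simp: f0_def cyl_def)
  qed
  then have Yne: "Y \<noteq> {}" by blast
  define G where "G = (\<lambda>q. Y - {q}) ` Y"
  have "Y \<inter> \<Inter>G \<noteq> {}"
  proof (rule baire_cantor[OF Ygd Yne])
    show "countable G" unfolding G_def using Ycount by blast
    fix T assume "T \<in> G"
    then obtain q where q: "q \<in> Y" "T = Y - {q}" unfolding G_def by blast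
    have "closedin cantor_space {q}"
      using closedin_Hausdorff_singleton[OF cantor_Hausdorff] by simp
    then have "openin cantor_space (UNIV - {q})"
      by (metis openin_diff cantor_UNIV(1))
    then have "openin (subtopology cantor_space Y) (Y \<inter> (UNIV - {q}))"
      by (rule openin_subtopology_Int2)
    moreover have "Y \<inter> (UNIV - {q}) = T" using q by blast
    ultimately show "openin (subtopology cantor_space Y) T" by simp
    show "T \<subseteq> Y" using q by blast
    fix y N assume y: "y \<in> Y"
    show "\<exists>f\<in>T. \<forall>i<N. f i = y i"
    proof (cases "y = q")
      case False then show ?thesis using y q by blast
    next
      case True
      have ysf: "finite {i. odd i \<and> \<not> y i}" and ynot: "infinite {i. even i \<and> y i} \<Longrightarrow> False"
        using y memY \<open>Y \<subseteq> Dset\<close> by (auto simp: Dset_def)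
      obtain B where B: "{i. odd i \<and> \<not> y i} \<subseteq> {..<B}"
        using finite_nat_bounded[OF ysf] by blast
      define m where "m = 2 * (N + n + B) + 1"
      have m0: "odd m" "N \<le> m" "n \<le> m" "B \<le> m" by (auto simp: m_def)
      have "y m"
      proof (rule ccontr)
        assume "\<not> y m"
        then have "m \<in> {i. odd i \<and> \<not> y i}" using m0 by simp
        then have "m < B" using B by auto
        then show False using m0 by simp
      qed
      note m = m0(1-3) this
      define f where "f = y(m := False)"
      have "f \<in> Y"
      proof -
        have "f \<in> cyl p n" using y memY m by (auto simp: f_def cyl_def)
        moreover have "{i. odd i \<and> \<not> f i} \<subseteq> insert m {i. odd i \<and> \<not> y i}" by (auto simp: f_def)
        then have "finite {i. odd i \<and> \<not> f i}" using ysf finite_subset by blast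
        then have "f \<in> Sf" by (simp add: Sf_def)
        moreover have "\<forall>i. even i \<and> n \<le> i \<longrightarrow> \<not> f i" using y memY m by (auto simp: f_def)
        ultimately show ?thesis using memY by blast
      qed
      moreover have "f \<noteq> q" using True m by (metis f_def fun_upd_same)
      moreover have "\<forall>i<N. f i = y i" using m by (auto simp: f_def)
      ultimately show ?thesis using q by blast
    qed
  qed
  then show False unfolding G_def by blast
qed


lemma nowhere_sc_aux:
  assumes W: "openin cantor_space W" and p: "p \<in> W" "p \<in> Sf"
  shows "\<not> sigma_compact_space (subtopology cantor_space (W \<inter> Sf))"
proof
  assume "sigma_compact_space (subtopology cantor_space (W \<inter> Sf))"
  then obtain F where F: "countable F" "\<Union>F = W \<inter> Sf"
    and Fc: "\<And>K. K \<in> F \<Longrightarrow> compactin (subtopology cantor_space (W \<inter> Sf)) K"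
    unfolding sigma_compact_space_def by auto
  have Kcl: "closedin cantor_space K" and Ksub: "K \<subseteq> W \<inter> Sf" if "K \<in> F" for K
    using Fc[OF that] compactin_imp_closedin[OF cantor_Hausdorff] by (auto simp: compactin_subtopology)
  obtain n where n: "cyl p n \<subseteq> W" using open_cyl_sub W p by blast
  define P where "P = (cyl p n \<inter> zeroset (\<lambda>i. odd i \<and> n \<le> i)) \<inter> Einf"
  have Pgd: "gdelta_in cantor_space P" unfolding P_def
  proof (rule gdelta_in_Int[OF closed_imp_gdelta_in[OF cantor_metrizable] Einf_gdelta])
    show "closedin cantor_space (cyl p n \<inter> zeroset (\<lambda>i. odd i \<and> n \<le> i))"
      by (rule closedin_Int[OF conjunct2[OF cyl_clopen] zeroset_closed])
  qed
  have memP: "f \<in> P \<longleftrightarrow> f \<in> cyl p n \<and> (\<forall>i. odd i \<and> n \<le> i \<longrightarrow> \<not> f i) \<and> infinite {i. even i \<and> f i}" for f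
    by (auto simp: P_def zeroset_def Einf_def)
  have PU: "P \<subseteq> W \<inter> Sf" using n Einf_sub by (auto simp: P_def)
  define f0 where "f0 = (\<lambda>i. if i < n then p i else even i)"
  have "f0 \<in> P"
  proof -
    have "{i. even i \<and> n \<le> i} \<subseteq> {i. even i \<and> f0 i}" by (auto simp: f0_def)
    then have "infinite {i. even i \<and> f0 i}" using inf_even_ge[of n] finite_subset by blast
    then show ?thesis using memP by (auto simp: f0_def cyl_def)
  qed
  then have Pne: "P \<noteq> {}" by blast
  define G where "G = (\<lambda>K. P - K) ` F"
  have "P \<inter> \<Inter>G \<noteq> {}"
  proof (rule baire_cantor[OF Pgd Pne])
    show "countable G" unfolding G_def using F by blast
    fix T assume "T \<in> G"
    then obtain K where K: "K \<in> F" "T = P - K" unfolding G_def by blast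
    have "openin cantor_space (UNIV - K)"
      using Kcl[OF K(1)] by (metis closedin_def topspace_cantor)
    then have "openin (subtopology cantor_space P) (P \<inter> (UNIV - K))"
      by (rule openin_subtopology_Int2)
    moreover have "P \<inter> (UNIV - K) = T" using K by blast
    ultimately show "openin (subtopology cantor_space P) T" by simp
    show "T \<subseteq> P" using K by blast
    fix y N assume y: "y \<in> P"
    have ycyl: "\<And>i. i < n \<Longrightarrow> y i = p i" and yodd: "\<And>i. odd i \<Longrightarrow> n \<le> i \<Longrightarrow> \<not> y i"
      using y unfolding memP cyl_def by auto
    show "\<exists>f\<in>T. \<forall>i<N. f i = y i"
    proof (rule ccontr)
      assume "\<not> (\<exists>f\<in>T. \<forall>i<N. f i = y i)"
      then have allK: "\<And>f. f \<in> P \<Longrightarrow> \<forall>i<N. f i = y i \<Longrightarrow> f \<in> K" using K by blast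
      define M0 where "M0 = max N n"
      define r where "r = (\<lambda>i. if i < M0 then y i else False)"
      have "r \<in> cantor_space closure_of K"
        unfolding in_closure_of
      proof (simp, intro allI impI)
        fix V assume V: "r \<in> V \<and> openin cantor_space V"
        then obtain M where M: "cyl r M \<subseteq> V" using open_cyl_sub by blast
        define M' where "M' = max M M0"
        define fz where "fz = (\<lambda>i. if i < M0 then y i else (even i \<and> M' \<le> i))"
        have fzP: "fz \<in> P"
        proof -
          have "{i. even i \<and> M' \<le> i} \<subseteq> {i. even i \<and> fz i}" by (auto simp: fz_def M'_def)
          then have "infinite {i. even i \<and> fz i}" using inf_even_ge[of M'] finite_subset by blast
          moreover have "fz \<in> cyl p n" using ycyl by (auto simp: fz_def cyl_def M0_def)
          moreover have "\<forall>i. odd i \<and> n \<le> i \<longrightarrow> \<not> fz i" using yodd by (auto simp: fz_def)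
          ultimately show ?thesis unfolding memP by blast
        qed
        moreover have "\<forall>i<N. fz i = y i" by (auto simp: fz_def M0_def)
        ultimately have "fz \<in> K" by (rule allK)
        moreover have "fz \<in> cyl r M" by (auto simp: fz_def r_def cyl_def M'_def)
        ultimately show "\<exists>y. y \<in> K \<and> y \<in> V" using M by blast
      qed
      then have "r \<in> K" using closure_of_closedin[OF Kcl[OF K(1)]] by simp
      then have "r \<in> Sf" using Ksub[OF K(1)] by auto
      moreover have "{i. even i \<and> r i} \<subseteq> {..<M0}" by (auto simp: r_def split: if_splits)
      then have "finite {i. even i \<and> r i}" using finite_subset by blast
      moreover have "{i. odd i \<and> M0 \<le> i} \<subseteq> {i. odd i \<and> \<not> r i}" by (auto simp: r_def)
      then have "infinite {i. odd i \<and> \<not> r i}" using inf_odd_ge[of M0] finite_subset by blast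
      ultimately show False by (simp add: Sf_def)
    qed
  qed
  then obtain x where x: "x \<in> P" "\<And>T. T \<in> G \<Longrightarrow> x \<in> T" by blast
  then obtain K where "K \<in> F" "x \<in> K" using PU F(2) by blast
  moreover have "P - K \<in> G" unfolding G_def using \<open>K \<in> F\<close> by blast
  ultimately show False using x(2)[of "P - K"] by blast
qed

theorem proposition5p4:
  shows "\<exists>S. semifilter S \<and> T_like (subspace_of_family S)"
proof (intro exI conjI)
  show "semifilter SS" by (rule semifilter_SS)
  let ?X = "subspace_of_family SS"
  have X: "?X = subtopology cantor_space Sf" by (simp add: subspace_of_family_def image_SS)
  have top: "topspace ?X = Sf" by (simp add: X)
  have Sfne: "(\<lambda>_. True) \<in> Sf" by (simp add: Sf_def)
  have opn: "\<exists>W p. openin cantor_space W \<and> p \<in> W \<and> p \<in> Sf \<and> U = W \<inter> Sf \<and> subtopology ?X U = subtopology cantor_space (W \<inter> Sf)"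
    if U1: "openin ?X U" and U2: "U \<noteq> {}" for U
  proof -
    have "openin (subtopology cantor_space Sf) U" using U1 X by simp
    then obtain W where W: "openin cantor_space W" "U = W \<inter> Sf"
      by (auto simp: openin_subtopology)
    then obtain p where "p \<in> W" "p \<in> Sf" using U2 by blast
    moreover have "subtopology ?X U = subtopology cantor_space (W \<inter> Sf)"
      using W by (simp add: X subtopology_subtopology Int_commute)
    ultimately show ?thesis using W by blast
  qed
  show "T_like ?X"
    unfolding T_like_def
  proof (intro conjI)
    show "zero_dimensional ?X" unfolding zero_dimensional_def X
      by (rule dimension_le_subtopology[OF cantor_dim0])
    show "\<exists>C D. C \<union> D = topspace ?X \<and> completely_metrizable_space (subtopology ?X C) \<and> countable D"
    proof (intro exI conjI)
      show "Einf \<union> Dset = topspace ?X" unfolding top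
        by (auto simp: Einf_def Dset_def Sf_def)
      have "subtopology ?X Einf = subtopology cantor_space Einf"
        using Einf_sub by (simp add: X subtopology_subtopology Int_absorb1)
      then show "completely_metrizable_space (subtopology ?X Einf)"
        using completely_metrizable_space_gdelta_in[OF cantor_cm Einf_gdelta] by simp
      show "countable Dset" by (rule Dset_countable)
    qed
    show "nowhere sigma_compact_space ?X"
      unfolding nowhere_def
    proof (intro conjI allI impI)
      show "topspace ?X \<noteq> {}" using top Sfne by blast
      fix U assume "openin ?X U \<and> U \<noteq> {}"
      then obtain W p where "openin cantor_space W" "p \<in> W" "p \<in> Sf"
        "subtopology ?X U = subtopology cantor_space (W \<inter> Sf)" using opn by blast
      then show "\<not> sigma_compact_space (subtopology ?X U)" using nowhere_sc_aux by simp
    qed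
    show "nowhere completely_metrizable_space ?X"
      unfolding nowhere_def
    proof (intro conjI allI impI)
      show "topspace ?X \<noteq> {}" using top Sfne by blast
      fix U assume "openin ?X U \<and> U \<noteq> {}"
      then obtain W p where "openin cantor_space W" "p \<in> W" "p \<in> Sf"
        "subtopology ?X U = subtopology cantor_space (W \<inter> Sf)" using opn by blast
      then show "\<not> completely_metrizable_space (subtopology ?X U)" using nowhere_cm_aux by simp
    qed
  qed
qed

end
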